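(* Suppose $\mathbb{F}$ has characteristic $2$ and $S$ is a symplectic form on $V$. Then there is no Weyl multiplier $m$ for $(V,S)$ taking values in $\{+1,-1\}$.
   Context: $\mathbb{F}$ is a finite field with $|\mathbb{F}|=2^n$, $\mathrm{Tr}:\mathbb{F}\to\mathbb{Z}_2$ is the field trace, and $V$ is a $2$-dimensional $\mathbb{F}$-vector space. A symplectic form is a nonzero $\mathbb{F}$-bilinear $S:V\times V\to\mathbb{F}$ with $S(\mathbf{v},\mathbf{v})=0$ for all $\mathbf{v}$. A Weyl multiplier for $(V,S)$ is a function $m:V\times V\to\{z\in\mathbb{C}:|z|=1\}$ with the following properties: - the cocycle identity $m(\mathbf{u}+\mathbf{v},\mathbf{w})m(\mathbf{u},\mathbf{v})=m(\mathbf{u},\mathbf{v}+\mathbf{w})m(\mathbf{v},\mathbf{w})$ holds; - $m(\mathbf{d}_1,\mathbf{d}_2)=1$ whenever $\mathbf{d}_1,\mathbf{d}_2$ lie in a common $1$-dimensional subspace; - $\overline{m(\mathbf{u},\mathbf{v})}m(\mathbf{v},\mathbf{u})=(-1)^{\mathrm{Tr}\,S(\mathbf{u},\mathbf{v})}$ for all $\mathbf{u},\mathbf{v}\in V$. *)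

theory Defs
  imports Complex_Main
begin

text \<open>Field trace of GF(2^n) over GF(2): Tr x = x + x^2 + x^4 + ... + x^(2^(n-1)).
  Its values lie in the prime field {0,1}.\<close>
definition field_trace :: "nat \<Rightarrow> 'f::field \<Rightarrow> 'f" where
  "field_trace n x = (\<Sum>i<n. x ^ (2 ^ i))"

text \<open>(-1)^(Tr x), with Tr x read in Z_2 = {0,1}.\<close>
definition trace_sign :: "nat \<Rightarrow> 'f::field \<Rightarrow> complex" where
  "trace_sign n x = (if field_trace n x = 0 then 1 else -1)"

definition symplectic_form ::
  "('f::field \<Rightarrow> 'v::ab_group_add \<Rightarrow> 'v) \<Rightarrow> ('v \<Rightarrow> 'v \<Rightarrow> 'f) \<Rightarrow> bool" where
  "symplectic_form scale S \<longleftrightarrow>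
     (\<forall>u v w. S (u + v) w = S u w + S v w) \<and>
     (\<forall>a u w. S (scale a u) w = a * S u w) \<and>
     (\<forall>u v w. S u (v + w) = S u v + S u w) \<and>
     (\<forall>a u w. S u (scale a w) = a * S u w) \<and>
     (\<exists>u v. S u v \<noteq> 0) \<and>
     (\<forall>v. S v v = 0)"

definition weyl_multiplier ::
  "nat \<Rightarrow> ('f::field \<Rightarrow> 'v::ab_group_add \<Rightarrow> 'v) \<Rightarrow> ('v \<Rightarrow> 'v \<Rightarrow> 'f)
     \<Rightarrow> ('v \<Rightarrow> 'v \<Rightarrow> complex) \<Rightarrow> bool" where
  "weyl_multiplier n scale S m \<longleftrightarrow>
     (\<forall>u v. norm (m u v) = 1) \<and>
     (\<forall>u v w. m (u + v) w * m u v = m u (v + w) * m v w) \<and>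
     (\<forall>d1 d2. (\<exists>W. module.subspace scale W \<and> vector_space.dim scale W = 1
                   \<and> d1 \<in> W \<and> d2 \<in> W) \<longrightarrow> m d1 d2 = 1) \<and>
     (\<forall>u v. cnj (m u v) * m v u = trace_sign n (S u v))"

end

theory Submission
  imports Defs "HOL-Computational_Algebra.Polynomial"
begin

lemma trace_nonzero:
  fixes n :: nat
  assumes card_F: "card (UNIV :: 'f::{field,finite} set) = 2 ^ n"
  shows "\<exists>a::'f. field_trace n a \<noteq> 0"
proof (rule ccontr)
  assume H: "\<not> (\<exists>a::'f. field_trace n a \<noteq> 0)"
  have n1: "n \<ge> 1"
  proof (rule ccontr)
    assume "\<not> n \<ge> 1" then have "n = 0" by simp
    then have "card (UNIV :: 'f set) = 1" using card_F by simp
    moreover have "card {0::'f, 1} = 2" by simp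
    moreover have "card {0::'f, 1} \<le> card (UNIV :: 'f set)" by (rule card_mono) auto
    ultimately show False by simp
  qed
  define p :: "'f poly" where "p = (\<Sum>i<n. monom 1 (2 ^ i))"
  have "coeff p 1 = (\<Sum>i<n. if 2 ^ i = (1::nat) then 1 else 0)"
    unfolding p_def coeff_sum by (simp add: coeff_monom eq_commute)
  also have "\<dots> = (\<Sum>i<n. if i = 0 then (1::'f) else 0)"
  proof (rule sum.cong)
    fix i :: nat
    have "(2::nat) ^ i = 1 \<longleftrightarrow> i = 0" by (cases i) auto
    then show "(if 2 ^ i = (1::nat) then (1::'f) else 0) = (if i = 0 then 1 else 0)" by simp
  qed simp
  also have "\<dots> = 1" using n1 by (simp add: sum.delta)
  finally have "coeff p 1 = 1" by simp
  then have pnz: "p \<noteq> 0" by auto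
  have deg: "degree p \<le> 2 ^ (n - 1)"
    unfolding p_def
  proof (rule degree_sum_le)
    fix i assume "i \<in> {..<n}"
    then have "(2::nat) ^ i \<le> 2 ^ (n - 1)" by (intro power_increasing) auto
    then show "degree (monom (1::'f) (2 ^ i)) \<le> 2 ^ (n - 1)" by (simp add: degree_monom_eq)
  qed simp
  have "\<And>x. poly p x = field_trace n x"
    unfolding p_def field_trace_def poly_sum by (simp add: poly_monom)
  then have "{x. poly p x = 0} = UNIV" using H by auto
  then have "card (UNIV :: 'f set) \<le> 2 ^ (n - 1)"
    using card_poly_roots_bound[OF pnz] deg by simp
  moreover have "(2::nat) ^ (n - 1) < 2 ^ n" using n1 by (intro power_strict_increasing) auto
  ultimately show False using card_F by linarith
qed

theorem mainTheorem6:
  fixes scale :: "'f::{field,finite} \<Rightarrow> 'v::ab_group_add \<Rightarrow> 'v"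
    and S :: "'v \<Rightarrow> 'v \<Rightarrow> 'f"
    and n :: nat
  assumes card_F: "card (UNIV :: 'f set) = 2 ^ n"
    and char2: "(2::'f) = 0"
    and vs: "vector_space scale"
    and dim2: "vector_space.dim scale (UNIV :: 'v set) = 2"
    and symp: "symplectic_form scale S"
  shows "\<not> (\<exists>m. weyl_multiplier n scale S m \<and> (\<forall>u v. m u v \<in> {1, -1}))"
proof
  interpret V: vector_space scale by (rule vs)
  assume "\<exists>m. weyl_multiplier n scale S m \<and> (\<forall>u v. m u v \<in> {1, -1})"
  then obtain m where wm: "weyl_multiplier n scale S m" and pm: "\<And>u v. m u v \<in> {1, -1}"
    by blast
  have cocy: "\<And>u v w. m (u + v) w * m u v = m u (v + w) * m v w"
    and lines: "\<And>d1 d2. (\<exists>W. V.subspace W \<and> V.dim W = 1 \<and> d1 \<in> W \<and> d2 \<in> W) \<Longrightarrow> m d1 d2 = 1"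
    and comm: "\<And>u v. cnj (m u v) * m v u = trace_sign n (S u v)"
    using wm unfolding weyl_multiplier_def by blast+
  have dbl: "\<And>x::'v. x + x = 0"
  proof -
    fix x :: 'v
    have "x + x = scale 1 x + scale 1 x" by simp
    also have "\<dots> = scale (1 + 1) x" by (simp only: V.scale_left_distrib)
    also have "(1 + 1 :: 'f) = 2" by simp
    finally show "x + x = 0" using char2 by simp
  qed
  have nz: "\<exists>w::'v. w \<noteq> 0"
  proof (rule ccontr)
    assume "\<not> (\<exists>w::'v. w \<noteq> 0)"
    then have "(UNIV :: 'v set) = V.span {}" by auto
    then have "V.dim (UNIV :: 'v set) = 0" using V.dim_span_eq_card_independent[OF V.independent_empty] by simp
    then show False using dim2 by simp
  qed
  have line: "\<And>x::'v. \<exists>W. V.subspace W \<and> V.dim W = 1 \<and> x \<in> W \<and> 0 \<in> W"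
  proof -
    fix x :: 'v
    obtain w where w: "w \<noteq> 0" "x \<in> V.span {w}"
    proof (cases "x = 0")
      case True
      then show ?thesis using nz that V.span_zero by blast
    next
      case False
      then show ?thesis using that V.span_base by blast
    qed
    have "V.dim (V.span {w}) = 1"
      using w(1) V.dim_span_eq_card_independent[of "{w}"] V.independent_insert[of w "{}"] by simp
    then show "?thesis x" using w V.span_zero V.subspace_span by blast
  qed
  have m0: "\<And>x. m x 0 = 1" and m0': "\<And>x. m 0 x = 1" and mxx: "\<And>x. m x x = 1"
    using lines line by blast+
  have sq: "\<And>u v. m u v * m u v = 1"
  proof -
    fix u v
    have "m u v = 1 \<or> m u v = -1" using pm[of u v] by auto
    then show "m u v * m u v = 1" by auto
  qed
  have c1: "\<And>u v. m u v * m v u = 1"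
  proof -
    fix u v :: 'v
    have e1: "m (u + v) u * m v u = m v (u + u) * m u u"
      using cocy[of v u u] by (simp add: add.commute)
    then have "m (u + v) u = m v u" using dbl m0 mxx by (metis mult_1_right sq mult.commute mult.assoc)
    have e2: "m ((u + v) + u) v * m (u + v) u = m (u + v) (u + v) * m u v"
      by (rule cocy)
    have "(u + v) + u = v" using dbl by (metis add.commute add.left_commute add_0_right)
    with e2 mxx have "m (u + v) u = m u v" by simp
    with \<open>m (u + v) u = m v u\<close> have "m v u = m u v" by simp
    then show "m u v * m v u = 1" using sq by simp
  qed
  have real: "\<And>u v. cnj (m u v) = m u v"
  proof -
    fix u v
    have "m u v = 1 \<or> m u v = -1" using pm[of u v] by auto
    then show "cnj (m u v) = m u v" by auto
  qed
  have tr0: "\<And>u v. field_trace n (S u v) = 0"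
  proof -
    fix u v
    have "trace_sign n (S u v) = 1" using comm[of u v] c1[of u v] real by simp
    then show "field_trace n (S u v) = 0" unfolding trace_sign_def by (auto split: if_splits)
  qed
  obtain a :: 'f where a: "field_trace n a \<noteq> 0" using trace_nonzero[OF card_F] by blast
  obtain u v where uv: "S u v \<noteq> 0" using symp unfolding symplectic_form_def by blast
  have "S (scale (a / S u v) u) v = a" using symp uv unfolding symplectic_form_def by simp
  then show False using tr0 a by metis
qed

end
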